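(* Let $H\in\mathbb{C}^{n\times n}$ be a Hermitian positive-definite matrix. Then $H$ is complex orthogonal, i.e. $H H^T = H^T H = \mathbb{I}_n$, if and only if there exists a complex orthogonal matrix $R\in\mathbb{C}^{n\times n}$ ($R R^T = R^T R = \mathbb{I}_n$) such that $H = R^\dagger R$.
   Context: $^T$ denotes transpose, $^\dagger$ conjugate transpose, $\mathbb{I}_n$ the $n\times n$ identity. *)

theory Defs
  imports "HOL-Analysis.Analysis"
begin

definition cmat_adjoint :: "complex^'n^'m \<Rightarrow> complex^'m^'n" where
  "cmat_adjoint A = (\<chi> i j. cnj (A $ j $ i))"

definition hermitian_cmat :: "complex^'n^'n \<Rightarrow> bool" where
  "hermitian_cmat H \<longleftrightarrow> cmat_adjoint H = H"

definition pos_def_cmat :: "complex^'n^'n \<Rightarrow> bool" where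
  "pos_def_cmat H \<longleftrightarrow> hermitian_cmat H \<and>
     (\<forall>x :: complex^'n. x \<noteq> 0 \<longrightarrow>
        (let q = (\<Sum>i\<in>UNIV. \<Sum>j\<in>UNIV. cnj (x $ i) * H $ i $ j * x $ j)
         in Im q = 0 \<and> Re q > 0))"

definition complex_orthogonal :: "complex^'n^'n \<Rightarrow> bool" where
  "complex_orthogonal R \<longleftrightarrow> R ** transpose R = mat 1 \<and> transpose R ** R = mat 1"

end

theory Submission imports Defs begin

lemma form_sym:
  fixes G :: "real^'n^'n"
  assumes "transpose G = G"
  shows "x \<bullet> (G *v y) = y \<bullet> (G *v x)"
proof -
  have "x \<bullet> (G *v y) = (\<Sum>i\<in>UNIV. \<Sum>j\<in>UNIV. x$i * G$i$j * y$j)"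
    by (simp add: inner_vec_def matrix_vector_mult_def sum_distrib_left mult.assoc)
  also have "\<dots> = (\<Sum>j\<in>UNIV. \<Sum>i\<in>UNIV. x$i * G$i$j * y$j)" by (rule sum.swap)
  also have "\<dots> = (\<Sum>j\<in>UNIV. \<Sum>i\<in>UNIV. y$j * G$j$i * x$i)"
  proof -
    have "G$i$j = G$j$i" for i j
      by (metis (no_types) assms transpose_def vec_lambda_beta)
    then show ?thesis by (simp add: mult_ac)
  qed
  also have "\<dots> = y \<bullet> (G *v x)"
    by (simp add: inner_vec_def matrix_vector_mult_def sum_distrib_left mult.assoc)
  finally show ?thesis .
qed

lemma gs_step:
  fixes G :: "real^'n^'n"
  assumes sym: "transpose G = G" and pd: "\<And>x. x \<noteq> 0 \<Longrightarrow> x \<bullet> (G *v x) > 0"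
   and fin: "finite B" and on: "\<forall>b\<in>B. \<forall>c\<in>B. b \<bullet> (G *v c) = (if b = c then 1 else 0)"
   and lt: "card B < CARD('n)"
  shows "\<exists>v. v \<notin> B \<and> v \<bullet> (G *v v) = 1 \<and> (\<forall>c\<in>B. c \<bullet> (G *v v) = 0 \<and> v \<bullet> (G *v c) = 0)"
proof -
  have "span B \<noteq> UNIV"
  proof
    assume "span B = UNIV"
    then have "dim (UNIV :: (real^'n) set) \<le> card B" using dim_le_card[of UNIV B] fin by auto
    moreover have "dim (UNIV :: (real^'n) set) = CARD('n)" by simp
    ultimately show False using lt by simp
  qed
  then obtain e where e: "e \<notin> span B" by auto
  define w where "w = e - (\<Sum>c\<in>B. (c \<bullet> (G *v e)) *\<^sub>R c)"
  have w0: "w \<noteq> 0"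
  proof
    assume "w = 0"
    then have "e = (\<Sum>c\<in>B. (c \<bullet> (G *v e)) *\<^sub>R c)" by (simp add: w_def)
    moreover have "(\<Sum>c\<in>B. (c \<bullet> (G *v e)) *\<^sub>R c) \<in> span B"
      by (intro span_sum span_scale span_base)
    ultimately show False using e by simp
  qed
  have orth: "d \<bullet> (G *v w) = 0" if d: "d \<in> B" for d
  proof -
    have "d \<bullet> (G *v w) = d \<bullet> (G *v e) - (\<Sum>c\<in>B. (c \<bullet> (G *v e)) * (d \<bullet> (G *v c)))"
      by (simp add: w_def matrix_vector_mult_diff_distrib vec.sum matrix_vector_mult_scaleR
          inner_diff_right inner_sum_right)
    also have "(\<Sum>c\<in>B. (c \<bullet> (G *v e)) * (d \<bullet> (G *v c))) = (\<Sum>c\<in>B. if d = c then c \<bullet> (G *v e) else 0)"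
      using on d by (intro sum.cong) auto
    also have "\<dots> = d \<bullet> (G *v e)" using fin d by (simp add: sum.delta)
    finally show ?thesis by simp
  qed
  define s where "s = w \<bullet> (G *v w)"
  have s: "s > 0" using pd[OF w0] by (simp add: s_def)
  define v where "v = (1 / sqrt s) *\<^sub>R w"
  have v1: "v \<bullet> (G *v v) = 1"
    using s by (simp add: v_def matrix_vector_mult_scaleR s_def[symmetric] power2_eq_square[symmetric])
  have vo: "c \<bullet> (G *v v) = 0 \<and> v \<bullet> (G *v c) = 0" if "c \<in> B" for c
    using orth[OF that] form_sym[OF sym, of v c]
    by (simp add: v_def matrix_vector_mult_scaleR)
  have "v \<notin> B" using vo v1 by fastforce
  then show ?thesis using v1 vo by blast
qed

lemma gs_k:
  fixes G :: "real^'n^'n"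
  assumes sym: "transpose G = G" and pd: "\<And>x. x \<noteq> 0 \<Longrightarrow> x \<bullet> (G *v x) > 0"
  shows "k \<le> CARD('n) \<Longrightarrow> \<exists>B. finite B \<and> card B = k \<and>
     (\<forall>b\<in>B. \<forall>c\<in>B. b \<bullet> (G *v c) = (if b = c then 1 else 0))"
proof (induction k)
  case 0
  then show ?case by (intro exI[of _ "{}"]) auto
next
  case (Suc k)
  then obtain B where B: "finite B" "card B = k"
    "\<forall>b\<in>B. \<forall>c\<in>B. b \<bullet> (G *v c) = (if b = c then 1 else 0)" by auto
  then obtain v where v: "v \<notin> B" "v \<bullet> (G *v v) = 1" "\<forall>c\<in>B. c \<bullet> (G *v v) = 0 \<and> v \<bullet> (G *v c) = 0"
    using gs_step[OF sym pd, of B] Suc.prems by auto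
  show ?case
    by (rule exI[of _ "insert v B"]) (use B v in auto)
qed

lemma gs_matrix:
  fixes G :: "real^'n^'n"
  assumes sym: "transpose G = G" and pd: "\<And>x. x \<noteq> 0 \<Longrightarrow> x \<bullet> (G *v x) > 0"
  shows "\<exists>V :: real^'n^'n. transpose V ** G ** V = mat 1"
proof -
  obtain B where B: "finite B" "card B = CARD('n)"
    "\<forall>b\<in>B. \<forall>c\<in>B. b \<bullet> (G *v c) = (if b = c then 1 else 0)"
    using gs_k[OF sym pd, of "CARD('n)"] by auto
  obtain f where f: "bij_betw f (UNIV :: 'n set) B"
    using finite_same_card_bij[of "UNIV :: 'n set" B] B by auto
  define V where "V = (\<chi> i j. f j $ i)"
  have "(transpose V ** G ** V) $ i $ j = f i \<bullet> (G *v f j)" for i j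
    by (simp add: V_def matrix_matrix_mult_def transpose_def inner_vec_def
        matrix_vector_mult_def sum_distrib_left sum_distrib_right mult_ac)
        (rule sum.swap)
  also have "f i \<bullet> (G *v f j) = (if i = j then 1 else 0)" for i j
    using B(3) f unfolding bij_betw_def inj_on_def by auto
  finally have "(transpose V ** G ** V) $ i $ j = mat 1 $ i $ j" for i j
    by (simp add: mat_def)
  then have "transpose V ** G ** V = mat 1" by (simp add: vec_eq_iff)
  then show ?thesis by blast
qed

definition cnjm :: "complex^'n^'m \<Rightarrow> complex^'n^'m" where
  "cnjm A = (\<chi> i j. cnj (A $ i $ j))"

definition cmap :: "real^'n^'m \<Rightarrow> complex^'n^'m" where
  "cmap A = (\<chi> i j. complex_of_real (A $ i $ j))"

lemma matrix_add_rdistrib: "(A + B) ** C = A ** C + B ** (C :: 'a::semiring_1^_^_)"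
  by (simp add: matrix_matrix_mult_def vec_eq_iff distrib_right sum.distrib)

lemma transpose_add: "transpose (A + B) = transpose A + transpose B"
  by (simp add: transpose_def vec_eq_iff)

lemma cnjm_mult: "cnjm (A ** B) = cnjm A ** cnjm B"
  by (simp add: cnjm_def matrix_matrix_mult_def vec_eq_iff cnj_sum)

lemma cnjm_mat1: "cnjm (mat 1) = mat 1"
  by (simp add: cnjm_def mat_def vec_eq_iff)

lemma cnjm_add: "cnjm (A + B) = cnjm A + cnjm B"
  by (simp add: cnjm_def vec_eq_iff)

lemma adj_eq: "cmat_adjoint A = transpose (cnjm A)"
  by (simp add: cmat_adjoint_def cnjm_def transpose_def vec_eq_iff)

lemma cnjm_transpose: "cnjm (transpose A) = transpose (cnjm A)"
  by (simp add: cnjm_def transpose_def vec_eq_iff)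

lemma cmap_mult: "cmap (A ** B) = cmap A ** cmap B"
  by (simp add: cmap_def matrix_matrix_mult_def vec_eq_iff)

lemma cmap_mat1: "cmap (mat 1) = mat 1"
  by (simp add: cmap_def mat_def vec_eq_iff)

lemma cmap_transpose: "cmap (transpose A) = transpose (cmap A)"
  by (simp add: cmap_def transpose_def vec_eq_iff)

lemma cnjm_cmap: "cnjm (cmap A) = cmap A"
  by (simp add: cmap_def cnjm_def vec_eq_iff)

lemma backward:
  fixes R :: "complex^'n^'n"
  assumes "complex_orthogonal R"
  shows "complex_orthogonal (cmat_adjoint R ** R)"
proof -
  have o1: "R ** transpose R = mat 1" and o2: "transpose R ** R = mat 1"
    using assms by (auto simp: complex_orthogonal_def)
  let ?H = "cmat_adjoint R ** R"
  have tH: "transpose ?H = transpose R ** cnjm R"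
    by (simp add: adj_eq matrix_transpose_mul)
  have "?H ** transpose ?H = transpose (cnjm R) ** (R ** transpose R) ** cnjm R"
    by (simp add: adj_eq matrix_transpose_mul matrix_mul_assoc)
  also have "\<dots> = cnjm (transpose R ** R)"
    by (simp add: o1 cnjm_mult cnjm_transpose)
  also have "\<dots> = mat 1" by (simp add: o2 cnjm_mat1)
  finally have "?H ** transpose ?H = mat 1" .
  then show ?thesis unfolding complex_orthogonal_def
    using matrix_left_right_inverse by blast
qed

theorem theorem1:
  fixes H :: "complex^'n^'n"
  assumes "hermitian_cmat H" and "pos_def_cmat H"
  shows "complex_orthogonal H \<longleftrightarrow>
         (\<exists>R :: complex^'n^'n. complex_orthogonal R \<and> H = cmat_adjoint R ** R)"
proof
  assume "\<exists>R :: complex^'n^'n. complex_orthogonal R \<and> H = cmat_adjoint R ** R"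
  then show "complex_orthogonal H" using backward by blast
next
  assume orth: "complex_orthogonal H"
  then have HH: "H ** transpose H = mat 1" by (simp add: complex_orthogonal_def)
  have herm: "cnjm H = transpose H"
    using assms(1) unfolding hermitian_cmat_def adj_eq by (metis transpose_transpose)
  have Hji: "H $ j $ i = cnj (H $ i $ j)" for i j
    using arg_cong[OF herm, of "\<lambda>M. M $ i $ j"] by (simp add: cnjm_def transpose_def)
  define K where "K = H + mat 1"
  define Gr :: "real^'n^'n" where "Gr = (\<chi> i j. 2 * (if i = j then 1 else 0) + 2 * Re (H $ i $ j))"
  have "K ** transpose K = H ** transpose H + H + transpose H + mat 1"
    by (simp add: K_def matrix_add_ldistrib matrix_add_rdistrib transpose_add transpose_mat)
  also have "\<dots> = cmap Gr"
  proof -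
    have "(mat 1 + H + transpose H + mat 1) $ i $ j = cmap Gr $ i $ j" for i j
      using Hji[of i j] complex_add_cnj[of "H $ i $ j"]
      by (simp add: Gr_def cmap_def transpose_def mat_def)
    then show ?thesis by (simp add: HH vec_eq_iff)
  qed
  finally have KK: "K ** transpose K = cmap Gr" .
  have symG: "transpose Gr = Gr"
  proof -
    have "Re (H $ j $ i) = Re (H $ i $ j)" for i j by (simp add: Hji[of i j])
    then show ?thesis by (simp add: Gr_def transpose_def vec_eq_iff)
  qed
  have pdG: "x \<bullet> (Gr *v x) > 0" if "x \<noteq> 0" for x :: "real^'n"
  proof -
    define xc :: "complex^'n" where "xc = (\<chi> i. complex_of_real (x $ i))"
    have "xc \<noteq> 0" using that by (auto simp: xc_def vec_eq_iff)
    then have q: "Re (\<Sum>i\<in>UNIV. \<Sum>j\<in>UNIV. cnj (xc $ i) * H $ i $ j * xc $ j) > 0"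
      using assms(2) unfolding pos_def_cmat_def Let_def by blast
    have e1: "x \<bullet> (Gr *v x) = (\<Sum>i\<in>UNIV. \<Sum>j\<in>UNIV. x$i * (2 * (if i = j then 1 else 0) + 2 * Re (H$i$j)) * x$j)"
      by (simp add: inner_vec_def matrix_vector_mult_def Gr_def sum_distrib_left mult.assoc)
    have e2: "(\<Sum>j\<in>UNIV. x$i * (2 * (if i = j then 1 else 0) + 2 * Re (H$i$j)) * x$j)
       = 2 * (x$i * x$i) + 2 * (\<Sum>j\<in>UNIV. x$i * Re (H$i$j) * x$j)" for i
    proof -
      have "(\<Sum>j\<in>UNIV. x$i * (2 * (if i = j then 1 else 0) + 2 * Re (H$i$j)) * x$j)
         = (\<Sum>j\<in>UNIV. (if i = j then 2 * (x$i * x$j) else 0) + 2 * (x$i * Re (H$i$j) * x$j))"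
        by (intro sum.cong) (auto simp: algebra_simps)
      then show ?thesis by (simp add: sum.distrib sum_distrib_left)
    qed
    have e3: "Re (\<Sum>i\<in>UNIV. \<Sum>j\<in>UNIV. cnj (xc $ i) * H $ i $ j * xc $ j)
        = (\<Sum>i\<in>UNIV. \<Sum>j\<in>UNIV. x$i * Re (H$i$j) * x$j)"
      by (simp add: xc_def Re_sum)
    have e4: "x \<bullet> x = (\<Sum>i\<in>UNIV. x$i * x$i)" by (simp add: inner_vec_def)
    have "x \<bullet> (Gr *v x) = 2 * (x \<bullet> x) + 2 * Re (\<Sum>i\<in>UNIV. \<Sum>j\<in>UNIV. cnj (xc $ i) * H $ i $ j * xc $ j)"
      unfolding e1 e2 e3 e4 by (simp add: sum.distrib sum_distrib_left)
    moreover have "x \<bullet> x \<ge> 0" by simp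
    ultimately show ?thesis using q by linarith
  qed
  obtain Vr :: "real^'n^'n" where Vr: "transpose Vr ** Gr ** Vr = mat 1"
    using gs_matrix[OF symG pdG] by blast
  define V where "V = cmap Vr"
  have VGV: "transpose V ** (K ** transpose K) ** V = mat 1"
    using arg_cong[OF Vr, of cmap] by (simp add: V_def KK cmap_mult cmap_transpose cmap_mat1)
  define R where "R = transpose V ** K"
  have RR: "R ** transpose R = mat 1"
    using VGV by (simp add: R_def matrix_transpose_mul matrix_mul_assoc)
  have Rorth: "complex_orthogonal R"
    using RR matrix_left_right_inverse unfolding complex_orthogonal_def by blast
  have cK: "cnjm K = transpose K"
    by (simp add: K_def cnjm_add herm cnjm_mat1 transpose_add transpose_mat)
  have adjR: "cmat_adjoint R = K ** V"
    by (simp add: adj_eq R_def cnjm_mult cnjm_transpose V_def cnjm_cmap cK matrix_transpose_mul)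
  define X where "X = V ** transpose V"
  have "transpose V ** ((K ** transpose K) ** V) = mat 1"
    using VGV by (simp add: matrix_mul_assoc)
  then have "((K ** transpose K) ** V) ** transpose V = mat 1"
    using matrix_left_right_inverse by blast
  then have "K ** (transpose K ** X) = mat 1" by (simp add: X_def matrix_mul_assoc)
  then have inv: "(transpose K ** X) ** K = mat 1"
    using matrix_left_right_inverse by blast
  have HK: "H ** transpose K = K"
    by (simp add: K_def matrix_add_ldistrib transpose_add transpose_mat HH add.commute)
  have "H = H ** ((transpose K ** X) ** K)" by (simp add: inv)
  also have "\<dots> = (H ** transpose K) ** X ** K" by (simp add: matrix_mul_assoc)
  also have "\<dots> = cmat_adjoint R ** R" by (simp only: adjR) (simp add: HK R_def X_def matrix_mul_assoc)
  finally show "\<exists>R :: complex^'n^'n. complex_orthogonal R \<and> H = cmat_adjoint R ** R"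
    using Rorth by blast
qed

end
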